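(* Let $n\ge2$ and let $U^+$ be the subalgebra of $U_{r,s}(\mathfrak{so}_{2n+1})$ generated by $e_1,\dots,e_n$, with root vectors as in the context. Then in $U^+$: (1) $e_i\mathcal E_{i,j}=s^2\mathcal E_{i,j}e_i$ for $1\le i<j\le n$; (2) $e_i\mathcal E_{i,j'}=s^2\mathcal E_{i,j'}e_i$ for $i+1<j\le n$; (3) $\mathcal E_{i,j}e_j=s^2e_j\mathcal E_{i,j}$ for $1\le i<j<n$; (4) $\mathcal E_{i,n'}e_n=s^2e_n\mathcal E_{i,n'}$ for $1\le i<n$; (5) $\mathcal E_{i,j'}e_j=r^{-2}e_j\mathcal E_{i,j'}$ for $1\le i<j<n$.
   Context: Let $r,s\in\mathbb C^*$ with $r^3\ne s^3$, $r^4\ne s^4$, $\mathbb K=\mathbb Q(r,s)$. $U_{r,s}(\mathfrak{so}_{2n+1})$ is the $\mathbb K$-algebra generated by $e_i,f_i,\omega_i^{\pm1},\omega_i'^{\pm1}$ ($1\le i\le n$) with: $\omega$'s commute, invertible; $\omega_je_i\omega_j^{-1}=\langle\omega_i',\omega_j\rangle e_i$, $\omega_jf_i\omega_j^{-1}=\langle\omega_i',\omega_j\rangle^{-1}f_i$, $\omega_j'e_i\omega_j'^{-1}=\langle\omega_j',\omega_i\rangle^{-1}e_i$, $\omega_j'f_i\omega_j'^{-1}=\langle\omega_j',\omega_i\rangle f_i$, where $\langle\omega_i',\omega_i\rangle=r^2s^{-2}$ ($i<n$), $\langle\omega_n',\omega_n\rangle=rs^{-1}$, $\langle\omega_i',\omega_{i+1}\rangle=r^{-2}$,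 $\langle\omega_{i+1}',\omega_i\rangle=s^2$ ($i<n$), others $1$; $e_if_j-f_je_i=\delta_{ij}(\omega_i-\omega_i')/(r_i-s_i)$ ($r_i=r^2,s_i=s^2$ for $i<n$; $r_n=r,s_n=s$); Serre relations $(\mathrm{ad}_le_i)^{1-a_{ij}}(e_j)=0=(\mathrm{ad}_rf_i)^{1-a_{ij}}(f_j)$, $i\ne j$, with $(a_{ij})$ the $B_n$ Cartan matrix ($a_{ii}=2$, $a_{i,i+1}=a_{i+1,i}=-1$ for $i\le n-2$, $a_{n-1,n}=-1$, $a_{n,n-1}=-2$, else $0$), $\mathrm{ad}_l(a)(b)=\sum a_{(1)}bS(a_{(2)})$, $\mathrm{ad}_r(a)(b)=\sum S(a_{(1)})ba_{(2)}$, for the Hopf structure $\Delta(\omega)=\omega\otimes\omega$, $\Delta(e_i)=e_i\otimes1+\omega_i\otimes e_i$, $\Delta(f_i)=1\otimes f_i+f_i\otimes\omega_i'$, $S(e_i)=-\omega_i^{-1}e_i$, $S(f_i)=-f_i\omega_i'^{-1}$. Root vectors: $\mathcal E_{i,i}=e_i$, $\mathcal E_{i,j}=e_i\mathcal E_{i+1,j}-r^2\mathcal E_{i+1,j}e_i$ ($1\le i<j\le n$), $\mathcal E_{i,n'}=\mathcal E_{i,n}e_n-rs\,e_n\mathcal E_{i,n}$ ($i\le n-1$), $\mathcal E_{i,j'}=\mathcal E_{i,(j+1)'}e_j-s^{-2}e_j\mathcal E_{i,(j+1)'}$ ($1\le i<j\le n-1$). *)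

theory Defs
  imports Complex_Main
begin

text \<open>A statement "identity X holds in U" is rendered as: X holds for every family of elements
  of every associative unital algebra over the complex numbers (scalars given by a central
  ring homomorphism c) satisfying all defining relations of U.  Since U_{r,s} is defined
  over K = Q(r,s) subset C and U is a subalgebra of its scalar extension to C, this is
  equivalent to the identity holding in U (and hence in U^+).\<close>

text \<open>Structure constants: pairing i j stands for the value of the pairing of omega'_i with omega_j.\<close>
definition pairing :: "nat \<Rightarrow> complex \<Rightarrow> complex \<Rightarrow> nat \<Rightarrow> nat \<Rightarrow> complex" where
  "pairing n r s i j =
     (if i = j then (if i < n then r^2 * inverse (s^2) else r * inverse s)
      else if j = i + 1 \<and> i < n then inverse (r^2)
      else if i = j + 1 \<and> j < n then s^2
      else 1)"

definition r_idx :: "nat \<Rightarrow> complex \<Rightarrow> nat \<Rightarrow> complex" where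
  "r_idx n r i = (if i < n then r^2 else r)"

definition cartanB :: "nat \<Rightarrow> nat \<Rightarrow> nat \<Rightarrow> int" where
  "cartanB n i j =
     (if i = j then 2
      else if (j = i + 1 \<and> i \<le> n - 2) \<or> (i = j + 1 \<and> j \<le> n - 2) then -1
      else if i = n - 1 \<and> j = n then -1
      else if i = n \<and> j = n - 1 then -2
      else 0)"

text \<open>Left adjoint action of e_i: ad_l(e_i)(b) = e_i b + omega_i b S(e_i) = e_i b - omega_i b omega_i^{-1} e_i.\<close>
definition adl :: "(nat \<Rightarrow> 'a::ring_1) \<Rightarrow> (nat \<Rightarrow> 'a) \<Rightarrow> (nat \<Rightarrow> 'a) \<Rightarrow> nat \<Rightarrow> 'a \<Rightarrow> 'a" where
  "adl e w wI i b = e i * b - w i * b * wI i * e i"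

text \<open>Right adjoint action of f_i: ad_r(f_i)(b) = S(1) b f_i + S(f_i) b omega'_i = b f_i - f_i omega'_i^{-1} b omega'_i.\<close>
definition adr :: "(nat \<Rightarrow> 'a::ring_1) \<Rightarrow> (nat \<Rightarrow> 'a) \<Rightarrow> (nat \<Rightarrow> 'a) \<Rightarrow> nat \<Rightarrow> 'a \<Rightarrow> 'a" where
  "adr f w' wI' i b = b * f i - f i * wI' i * b * w' i"

definition is_Urs_rep ::
  "nat \<Rightarrow> complex \<Rightarrow> complex \<Rightarrow> (complex \<Rightarrow> 'a::ring_1) \<Rightarrow> (nat \<Rightarrow> 'a) \<Rightarrow> (nat \<Rightarrow> 'a)
    \<Rightarrow> (nat \<Rightarrow> 'a) \<Rightarrow> (nat \<Rightarrow> 'a) \<Rightarrow> (nat \<Rightarrow> 'a) \<Rightarrow> (nat \<Rightarrow> 'a) \<Rightarrow> bool" where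
  "is_Urs_rep n r s c e f w w' wI wI' \<longleftrightarrow>
     \<comment> \<open>c is a central unital ring homomorphism (algebra structure)\<close>
     c 1 = 1 \<and> (\<forall>x y. c (x + y) = c x + c y) \<and> (\<forall>x y. c (x * y) = c x * c y) \<and>
     (\<forall>x (a::'a). c x * a = a * c x) \<and>
     (\<forall>i\<in>{1..n}. \<forall>j\<in>{1..n}.
        \<comment> \<open>the omega's commute and are invertible\<close>
        w i * w j = w j * w i \<and> w' i * w' j = w' j * w' i \<and> w i * w' j = w' j * w i \<and>
        w i * wI i = 1 \<and> wI i * w i = 1 \<and> w' i * wI' i = 1 \<and> wI' i * w' i = 1 \<and>
        \<comment> \<open>conjugation relations\<close>
        w j * e i * wI j = c (pairing n r s i j) * e i \<and>
        w j * f i * wI j = c (inverse (pairing n r s i j)) * f i \<and>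
        w' j * e i * wI' j = c (inverse (pairing n r s j i)) * e i \<and>
        w' j * f i * wI' j = c (pairing n r s j i) * f i \<and>
        \<comment> \<open>commutation of e and f\<close>
        e i * f j - f j * e i =
          (if i = j then c (inverse (r_idx n r i - r_idx n s i)) * (w i - w' i) else 0) \<and>
        \<comment> \<open>Serre relations\<close>
        (i \<noteq> j \<longrightarrow>
           (adl e w wI i ^^ nat (1 - cartanB n i j)) (e j) = 0 \<and>
           (adr f w' wI' i ^^ nat (1 - cartanB n i j)) (f j) = 0))"

text \<open>Root vectors. E_aux k i = E_{i,i+k}.\<close>
primrec E_aux :: "(complex \<Rightarrow> 'a::ring_1) \<Rightarrow> complex \<Rightarrow> (nat \<Rightarrow> 'a) \<Rightarrow> nat \<Rightarrow> nat \<Rightarrow> 'a" where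
  "E_aux c r e 0 i = e i"
| "E_aux c r e (Suc k) i = e i * E_aux c r e k (i + 1) - c (r^2) * E_aux c r e k (i + 1) * e i"

definition rootE :: "(complex \<Rightarrow> 'a::ring_1) \<Rightarrow> complex \<Rightarrow> (nat \<Rightarrow> 'a) \<Rightarrow> nat \<Rightarrow> nat \<Rightarrow> 'a" where
  "rootE c r e i j = E_aux c r e (j - i) i"

text \<open>Ep_aux k i = E_{i,(n-k)'}.\<close>
primrec Ep_aux :: "nat \<Rightarrow> (complex \<Rightarrow> 'a::ring_1) \<Rightarrow> complex \<Rightarrow> complex \<Rightarrow> (nat \<Rightarrow> 'a) \<Rightarrow> nat \<Rightarrow> nat \<Rightarrow> 'a" where
  "Ep_aux n c r s e 0 i = rootE c r e i n * e n - c (r * s) * e n * rootE c r e i n"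
| "Ep_aux n c r s e (Suc k) i =
     Ep_aux n c r s e k i * e (n - Suc k) - c (inverse (s^2)) * e (n - Suc k) * Ep_aux n c r s e k i"

definition rootEp :: "nat \<Rightarrow> (complex \<Rightarrow> 'a::ring_1) \<Rightarrow> complex \<Rightarrow> complex \<Rightarrow> (nat \<Rightarrow> 'a) \<Rightarrow> nat \<Rightarrow> nat \<Rightarrow> 'a" where
  "rootEp n c r s e i j = Ep_aux n c r s e (n - j) i"

end

theory Submission imports Defs begin


locale cen =
  fixes c :: "complex \<Rightarrow> 'a::ring_1"
  assumes c1: "c 1 = 1" and cadd: "\<And>x y. c (x + y) = c x + c y"
    and cmul: "\<And>x y. c (x * y) = c x * c y" and ccomm: "\<And>x a. c x * a = a * c x"
begin

lemma c0[simp]: "c 0 = 0" using cadd[of 0 0] by simp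
lemma cneg: "c (- x) = - c x"
proof -
  have "c x + c (- x) = 0" using cadd[of x "-x"] by simp
  then show ?thesis by (metis minus_unique)
qed

definition sm :: "complex \<Rightarrow> 'a \<Rightarrow> 'a" where "sm k x = c k * x"

lemma smL: "a * sm k b = sm k (a * b)" unfolding sm_def by (metis ccomm mult.assoc)
lemma smR: "sm k a * b = sm k (a * b)" unfolding sm_def by (simp add: mult.assoc)
lemma smsm: "sm k (sm l a) = sm (k * l) a" unfolding sm_def by (simp add: cmul mult.assoc)
lemma smadd: "sm k (a + b) = sm k a + sm k b" unfolding sm_def by (simp add: algebra_simps)
lemma smdiff: "sm k (a - b) = sm k a - sm k b" unfolding sm_def by (simp add: algebra_simps)
lemma smneg: "sm k (- a) = - sm k a" unfolding sm_def by simp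
lemma smkadd: "sm (k + l) a = sm k a + sm l a" unfolding sm_def by (simp add: cadd algebra_simps)
lemma smkneg: "sm (- k) a = - sm k a" unfolding sm_def by (simp add: cneg)
lemma smkdiff: "sm (k - l) a = sm k a - sm l a" using smkadd[of k "-l" a] smkneg[of l a] by simp
lemma sm1: "sm 1 a = a" unfolding sm_def by (simp add: c1)
lemma sm0: "sm 0 a = 0" unfolding sm_def by simp

definition qb :: "complex \<Rightarrow> 'a \<Rightarrow> 'a \<Rightarrow> 'a" where "qb q x y = x * y - sm q (y * x)"

lemmas nsimps = algebra_simps smL smR smsm smadd smdiff smneg smkadd smkneg smkdiff

lemma L1: assumes "A * C = C * A"
  shows "qb q (qb p A B) C = qb p A (qb q B C)"
proof -
  have 1: "A * (C * B) = C * (A * B)" using assms by (metis mult.assoc)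
  have 2: "B * (C * A) = B * (A * C)" using assms by simp
  show ?thesis unfolding qb_def by (simp add: nsimps 1 2)
qed

lemma comm_qb: assumes "m * x = x * m" "m * y = y * m"
  shows "m * qb q x y = qb q x y * m"
proof -
  have 1: "m * (x * y) = x * (y * m)" by (metis assms mult.assoc)
  have 2: "m * (y * x) = y * (x * m)" by (metis assms mult.assoc)
  show ?thesis unfolding qb_def by (simp add: nsimps 1 2)
qed

lemma L3R: assumes "X * e = sm l (e * X)" "Y * e = sm m (e * Y)"
  shows "qb q X Y * e = sm (l * m) (e * qb q X Y)"
proof -
  have 1: "X * (Y * e) = sm (l*m) (e * (X * Y))"
    by (metis assms smL smR smsm mult.assoc mult.commute)
  have 2: "Y * (X * e) = sm (l*m) (e * (Y * X))"
    by (metis assms smL smR smsm mult.assoc)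
  show ?thesis unfolding qb_def by (simp add: nsimps 1 2)
qed

lemma L3L: assumes "e * X = sm l (X * e)" "e * Y = sm m (Y * e)"
  shows "e * qb q X Y = sm (l * m) (qb q X Y * e)"
proof -
  have 1: "e * (X * Y) = sm (l*m) (X * (Y * e))"
    by (metis assms smL smR smsm mult.assoc)
  have 2: "e * (Y * X) = sm (l*m) (Y * (X * e))"
    by (metis assms smL smR smsm mult.assoc mult.commute)
  show ?thesis unfolding qb_def by (simp add: nsimps 1 2)
qed

lemma L3R1: assumes "X * e = sm l (e * X)" "Y * e = e * Y"
  shows "qb q X Y * e = sm l (e * qb q X Y)"
  using L3R[OF assms(1), of Y 1] assms(2) by (simp add: sm1)
lemma L3R2: assumes "X * e = e * X" "Y * e = sm l (e * Y)"
  shows "qb q X Y * e = sm l (e * qb q X Y)"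
  using L3R[of X e 1 Y l] assms by (simp add: sm1)
lemma L3L1: assumes "e * X = sm l (X * e)" "e * Y = Y * e"
  shows "e * qb q X Y = sm l (qb q X Y * e)"
  using L3L[OF assms(1), of Y 1] assms(2) by (simp add: sm1)
lemma L3L2: assumes "e * X = X * e" "e * Y = sm l (Y * e)"
  shows "e * qb q X Y = sm l (qb q X Y * e)"
  using L3L[of e X 1 Y l] assms by (simp add: sm1)

lemma Qsym: assumes "x * qb p x y = sm q (qb p x y * x)"
  shows "x * qb q x y = sm p (qb q x y * x)"
proof -
  have "x * (x * y) = sm p (x * (y * x)) + sm q (x * (y * x)) - sm (q * p) (y * (x * x))"
    using assms unfolding qb_def by (simp add: nsimps)
  then show ?thesis unfolding qb_def by (simp add: nsimps mult.commute)
qed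

lemma inv_rel: assumes "p \<noteq> 0" "x * X = sm p (X * x)"
  shows "X * x = sm (inverse p) (x * X)"
proof -
  have "sm (inverse p) (x * X) = sm (inverse p * p) (X * x)" using assms(2) by (simp add: smsm)
  then show ?thesis using assms(1) by (simp add: sm1)
qed

lemma scaleR: assumes "X * x = sm l (x * X)"
  shows "(sm k X) * x = sm l (x * (sm k X))"
  using assms by (simp add: nsimps mult.commute)
lemma scaleL: assumes "x * X = sm l (X * x)"
  shows "x * (sm k X) = sm l ((sm k X) * x)"
  using assms by (simp add: nsimps mult.commute)

lemma qb_swap: assumes "q \<noteq> 0" shows "qb q x y = sm (- q) (qb (inverse q) y x)"
proof -
  have "sm (-q) (sm (inverse q) (x * y)) = - (x * y)"
    using assms by (simp add: smsm smkneg sm1)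
  then show ?thesis unfolding qb_def by (simp add: smdiff smneg smkneg)
qed

lemma qb_scaleL: "qb q (sm k X) Y = sm k (qb q X Y)"
  unfolding qb_def by (simp add: nsimps)

lemma cancel_sm: assumes "k \<noteq> 0" "sm k x = sm k y" shows "x = y"
proof -
  have "sm (inverse k) (sm k x) = sm (inverse k) (sm k y)" using assms by simp
  then show ?thesis using assms(1) by (simp add: smsm sm1)
qed

lemma t5_ident:
  fixes a b U :: 'a and R S :: complex
  assumes aU: "U * a = a * U"
  shows "sm (S*(R+S)) (b * (a * (b * U - sm R (U * b)) - sm R ((b * U - sm R (U * b)) * a))
           - (a * (b * U - sm R (U * b)) - sm R ((b * U - sm R (U * b)) * a)) * b)
   = sm (-R) (a * (b*(b*U) - sm (R+S) (b*(U*b)) + sm (R*S) (U*(b*b))))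
   + sm (R*S*S) ((b*(b*U) - sm (R+S) (b*(U*b)) + sm (R*S) (U*(b*b))) * a)
   + sm (R*R*S) (U * (sm (R*S) (b*(b*a)) - sm (R+S) (b*(a*b)) + a*(b*b)))
   + sm (-S) ((sm (R*S) (b*(b*a)) - sm (R+S) (b*(a*b)) + a*(b*b)) * U)
   + sm (R+S) (a * (b * (b * U - sm R (U * b)) - sm S ((b * U - sm R (U * b)) * b)))
   - sm ((R+S)*(R*S)) ((b * (b * U - sm R (U * b)) - sm S ((b * U - sm R (U * b)) * b)) * a)"
proof -
  have aU2: "U * (a * w) = a * (U * w)" for w using aU by (metis mult.assoc)
  show ?thesis by (simp add: nsimps aU aU2)
qed

lemma t5: fixes R S :: complex
  assumes aU: "U * a = a * U" and Rn: "R \<noteq> 0" and Sn: "S \<noteq> 0" and RS: "R + S \<noteq> 0"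
    and bV: "b * qb R b U = sm S (qb R b U * b)"
    and D: "b * qb (inverse R) b a = sm (inverse S) (qb (inverse R) b a * b)"
  shows "b * qb R a (qb R b U) = qb R a (qb R b U) * b"
proof -
  have cub: "b*(b*U) - sm (R+S) (b*(U*b)) + sm (R*S) (U*(b*b)) = 0"
    using bV unfolding qb_def by (simp add: nsimps)
  have D1: "b * (b * a) - sm (inverse R) (b * (a * b)) = sm (inverse S) (b * (a * b)) - sm (inverse S * inverse R) (a * (b * b))"
    using D unfolding qb_def by (simp add: nsimps mult.commute)
  have "sm (R*S) (b * (b * a) - sm (inverse R) (b * (a * b))) = sm (R*S) (sm (inverse S) (b * (a * b)) - sm (inverse S * inverse R) (a * (b * b)))"
    using D1 by simp
  then have "sm (R*S) (b * (b * a)) - sm (R*S*inverse R) (b * (a * b)) = sm (R*S*inverse S) (b * (a * b)) - sm (R*S*(inverse S * inverse R)) (a * (b * b))"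
    by (simp add: smdiff smsm)
  moreover have "R*S*inverse R = S" "R*S*inverse S = R" "R*S*(inverse S * inverse R) = 1"
    using Rn Sn by (simp_all add: field_simps)
  ultimately have "sm (R*S) (b * (b * a)) - sm S (b * (a * b)) = sm R (b * (a * b)) - (a * (b * b))"
    by (simp add: sm1)
  then have D': "sm (R*S) (b*(b*a)) - sm (R+S) (b*(a*b)) + a*(b*b) = 0"
    by (simp add: smkadd algebra_simps)
  have bv0: "b * (b * U - sm R (U * b)) - sm S ((b * U - sm R (U * b)) * b) = 0"
    using bV unfolding qb_def by simp
  have "sm (S*(R+S)) (b * qb R a (qb R b U) - qb R a (qb R b U) * b) = 0"
    unfolding qb_def t5_ident[OF aU] cub D' bv0 by (simp add: sm0 nsimps)
  then have "sm (S*(R+S)) (b * qb R a (qb R b U) - qb R a (qb R b U) * b) = sm (S*(R+S)) 0"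
    by (simp add: sm_def)
  moreover have "S*(R+S) \<noteq> 0" using Sn RS by simp
  ultimately have "b * qb R a (qb R b U) - qb R a (qb R b U) * b = 0"
    using cancel_sm by blast
  then show ?thesis by simp
qed

end


locale urs = cen c for c :: "complex \<Rightarrow> 'a::ring_1" +
  fixes n :: nat and r s :: complex and e :: "nat \<Rightarrow> 'a"
  assumes n2: "n \<ge> 2" and rn: "r \<noteq> 0" and sn: "s \<noteq> 0" and rs: "r^2 + s^2 \<noteq> 0"
  and comm: "\<And>i j. \<lbrakk>1 \<le> i; j \<le> n; i + 2 \<le> j\<rbrakk> \<Longrightarrow> e i * e j = e j * e i"
  and serC: "\<And>j. \<lbrakk>1 \<le> j; j < n\<rbrakk> \<Longrightarrow>
     e j * qb (s^2) (e j) (e (j+1)) = sm (r^2) (qb (s^2) (e j) (e (j+1)) * e j)"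
  and serD: "\<And>i. \<lbrakk>1 \<le> i; i + 1 < n\<rbrakk> \<Longrightarrow>
     e (i+1) * qb (inverse (r^2)) (e (i+1)) (e i) = sm (inverse (s^2)) (qb (inverse (r^2)) (e (i+1)) (e i) * e (i+1))"
  and quart: "e n * qb (inverse (r*s)) (e n) (qb (inverse (r^2)) (e n) (e (n-1)))
      = sm (inverse (s^2)) (qb (inverse (r*s)) (e n) (qb (inverse (r^2)) (e n) (e (n-1))) * e n)"
begin

abbreviation "RE \<equiv> rootE c r e"
abbreviation "REp \<equiv> rootEp n c r s e"

lemma rootE_refl: "RE i i = e i" unfolding rootE_def by simp

lemma rootE_step: assumes "i < j" shows "RE i j = qb (r^2) (e i) (RE (i+1) j)"
proof -
  have "j - i = Suc (j - (i+1))" using assms by simp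
  then show ?thesis unfolding rootE_def qb_def sm_def by (simp add: mult.assoc)
qed

lemma rootEp_n: "REp i n = qb (r*s) (RE i n) (e n)"
  unfolding rootEp_def qb_def sm_def by (simp add: mult.assoc)

lemma rootEp_step: assumes "j < n" shows "REp i j = qb (inverse (s^2)) (REp i (j+1)) (e j)"
proof -
  have 1: "n - j = Suc (n - (j+1))" using assms by simp
  have 2: "n - Suc (n - (j+1)) = j" using assms by simp
  show ?thesis unfolding rootEp_def qb_def sm_def 1 by (simp only: Ep_aux.simps 2 mult.assoc)
qed

primrec Fa :: "nat \<Rightarrow> 'a" where
  "Fa 0 = e n"
| "Fa (Suc k) = qb (inverse (s^2)) (Fa k) (e (n - Suc k))"

definition F :: "nat \<Rightarrow> 'a" where "F j = Fa (n - j)"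

lemma F_n: "F n = e n" unfolding F_def by simp
lemma F_step: assumes "j < n" shows "F j = qb (inverse (s^2)) (F (j+1)) (e j)"
proof -
  have 1: "n - j = Suc (n - (j+1))" using assms by simp
  have 2: "n - Suc (n - (j+1)) = j" using assms by simp
  show ?thesis unfolding F_def 1 by (simp only: Fa.simps 2)
qed

lemma comm2: assumes "1 \<le> i" "i \<le> n" "1 \<le> j" "j \<le> n" "i + 2 \<le> j \<or> j + 2 \<le> i"
  shows "e i * e j = e j * e i"
  using assms comm by metis

lemma comm_E_aux: "\<forall>i. 1 \<le> m \<longrightarrow> m \<le> n \<longrightarrow> 1 \<le> i \<longrightarrow> i + d \<le> n \<longrightarrow> (m + 2 \<le> i \<or> i + d + 2 \<le> m)
   \<longrightarrow> e m * RE i (i + d) = RE i (i + d) * e m"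
proof (induction d)
  case 0
  then show ?case by (simp add: rootE_refl comm2)
next
  case (Suc d)
  show ?case
  proof (intro allI impI)
    fix i assume h: "1 \<le> m" "m \<le> n" "1 \<le> i" "i + Suc d \<le> n" "m + 2 \<le> i \<or> i + Suc d + 2 \<le> m"
    have st: "RE i (i + Suc d) = qb (r^2) (e i) (RE (i+1) (i + 1 + d))"
      using rootE_step[of i "i + Suc d"] by simp
    have a: "e m * e i = e i * e m" using h by (intro comm2) auto
    have hh: "1 \<le> i+1" "i+1+d \<le> n" "m + 2 \<le> i+1 \<or> i+1+d+2 \<le> m" using h by auto
    have b: "e m * RE (i+1) (i+1+d) = RE (i+1) (i+1+d) * e m"
      using Suc.IH h(1,2) hh by blast
    show "e m * RE i (i + Suc d) = RE i (i + Suc d) * e m"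
      unfolding st by (rule comm_qb[OF a b])
  qed
qed

lemma comm_E: assumes "1 \<le> m" "m \<le> n" "1 \<le> i" "i \<le> j" "j \<le> n" "m + 2 \<le> i \<or> j + 2 \<le> m"
  shows "e m * RE i j = RE i j * e m"
  using comm_E_aux[of m "j - i"] assms by auto

lemma comm_F_aux: "\<forall>j. n - j = k \<longrightarrow> 1 \<le> m \<longrightarrow> m + 2 \<le> j \<longrightarrow> j \<le> n \<longrightarrow> e m * F j = F j * e m"
proof (induction k)
  case 0
  then show ?case by (auto simp: F_n comm2 intro!: comm2)
next
  case (Suc k)
  show ?case
  proof (intro allI impI)
    fix j assume h: "n - j = Suc k" "1 \<le> m" "m + 2 \<le> j" "j \<le> n"
    have jn: "j < n" using h by simp
    have a: "e m * F (j+1) = F (j+1) * e m" using Suc.IH h by auto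
    have b: "e m * e j = e j * e m" using h jn by (intro comm2) auto
    show "e m * F j = F j * e m" unfolding F_step[OF jn] by (rule comm_qb[OF a b])
  qed
qed

lemma comm_F: assumes "1 \<le> m" "m + 2 \<le> j" "j \<le> n" shows "e m * F j = F j * e m"
  using comm_F_aux assms by blast

lemma S1: assumes "1 \<le> i" "i < n"
  shows "e i * qb (r^2) (e i) (e (i+1)) = sm (s^2) (qb (r^2) (e i) (e (i+1)) * e i)"
  using Qsym[OF serC[OF assms]] .

lemma claim1: assumes "1 \<le> i" "i < j" "j \<le> n"
  shows "e i * RE i j = sm (s^2) (RE i j * e i)"
proof (cases "j = i + 1")
  case True
  then show ?thesis using S1[of i] assms rootE_step[of i j] by (simp add: rootE_refl)
next
  case False
  then have j2: "i + 1 < j" using assms by simp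
  have eq: "RE i j = qb (r^2) (qb (r^2) (e i) (e (i+1))) (RE (i+2) j)"
  proof -
    have "RE i j = qb (r^2) (e i) (qb (r^2) (e (i+1)) (RE (i+2) j))"
      using rootE_step[of i j] rootE_step[of "i+1" j] j2 assms by simp
    also have "\<dots> = qb (r^2) (qb (r^2) (e i) (e (i+1))) (RE (i+2) j)"
      by (rule L1[symmetric], rule comm_E) (use assms j2 in auto)
    finally show ?thesis .
  qed
  have c: "e i * RE (i+2) j = RE (i+2) j * e i" by (rule comm_E) (use assms j2 in auto)
  show ?thesis unfolding eq by (rule L3L1[OF S1 c]) (use assms in auto)
qed

lemma S2: assumes "1 \<le> i" "i + 1 < n"
  shows "qb (r^2) (e i) (e (i+1)) * e (i+1) = sm (s^2) (e (i+1) * qb (r^2) (e i) (e (i+1)))"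
proof -
  have R: "r^2 \<noteq> 0" and S: "inverse (s^2) \<noteq> 0" using rn sn by auto
  have "qb (inverse (r^2)) (e (i+1)) (e i) * e (i+1) = sm (inverse (inverse (s^2))) (e (i+1) * qb (inverse (r^2)) (e (i+1)) (e i))"
    by (rule inv_rel[OF S serD[OF assms]])
  then show ?thesis unfolding qb_swap[OF R, of "e i" "e (i+1)"] by (simp add: scaleR)
qed

lemma claim3_aux: "\<forall>i. 1 \<le> i \<longrightarrow> i + Suc d = j \<longrightarrow> j < n \<longrightarrow> RE i j * e j = sm (s^2) (e j * RE i j)"
proof (induction d)
  case 0
  then show ?case using S2 rootE_step by (auto simp: rootE_refl)
next
  case (Suc d)
  show ?case
  proof (intro allI impI)
    fix i assume h: "1 \<le> i" "i + Suc (Suc d) = j" "j < n"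
    have a: "e i * e j = e j * e i" using h by (intro comm2) auto
    have b: "RE (i+1) j * e j = sm (s^2) (e j * RE (i+1) j)" using Suc.IH h by auto
    show "RE i j * e j = sm (s^2) (e j * RE i j)"
      using rootE_step[of i j] h L3R2[OF a b] by simp
  qed
qed

lemma claim3: assumes "1 \<le> i" "i < j" "j < n" shows "RE i j * e j = sm (s^2) (e j * RE i j)"
  using claim3_aux[of "j - i - 1" j] assms by auto

lemma cU_aux: "\<forall>i. 1 \<le> i \<longrightarrow> i + Suc d = j \<longrightarrow> j < n \<longrightarrow> e j * RE i n = RE i n * e j"
proof (induction d)
  case 0
  show ?case
  proof (intro allI impI)
    fix i assume h: "1 \<le> i" "i + Suc 0 = j" "j < n"
    have eq: "RE i n = qb (r^2) (e i) (qb (r^2) (e (i+1)) (RE (i+2) n))"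
      using rootE_step[of i n] rootE_step[of "i+1" n] h by simp
    have aU: "RE (i+2) n * e i = e i * RE (i+2) n" by (rule comm_E[symmetric]) (use h in auto)
    have bV: "e (i+1) * qb (r^2) (e (i+1)) (RE (i+2) n) = sm (s^2) (qb (r^2) (e (i+1)) (RE (i+2) n) * e (i+1))"
      using claim1[of "i+1" n] rootE_step[of "i+1" n] h by simp
    have R: "r^2 \<noteq> 0" "s^2 \<noteq> 0" using rn sn by auto
    show "e j * RE i n = RE i n * e j"
      unfolding eq using t5[OF aU R rs bV serD] h by auto
  qed
next
  case (Suc d)
  show ?case
  proof (intro allI impI)
    fix i assume h: "1 \<le> i" "i + Suc (Suc d) = j" "j < n"
    have a: "e j * e i = e i * e j" using h by (intro comm2) auto
    have b: "e j * RE (i+1) n = RE (i+1) n * e j" using Suc.IH h by auto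
    show "e j * RE i n = RE i n * e j"
      using rootE_step[of i n] h comm_qb[OF a b] by simp
  qed
qed

lemma cU: assumes "1 \<le> i" "i < j" "j < n" shows "e j * RE i n = RE i n * e j"
  using cU_aux[of "j - i - 1" j] assms by auto

lemma EpF_aux: "\<forall>j. n - j = k \<longrightarrow> 1 \<le> i \<longrightarrow> i < j \<longrightarrow> j \<le> n \<longrightarrow> REp i j = qb (r*s) (RE i n) (F j)"
proof (induction k)
  case 0
  then show ?case by (auto simp: rootEp_n F_n)
next
  case (Suc k)
  show ?case
  proof (intro allI impI)
    fix j assume h: "n - j = Suc k" "1 \<le> i" "i < j" "j \<le> n"
    have jn: "j < n" using h by simp
    have IH: "REp i (j+1) = qb (r*s) (RE i n) (F (j+1))" using Suc.IH h by auto
    have cm: "RE i n * e j = e j * RE i n" using cU[of i j] h jn by simp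
    show "REp i j = qb (r*s) (RE i n) (F j)"
      unfolding rootEp_step[OF jn] F_step[OF jn] IH by (rule L1[OF cm])
  qed
qed

lemma EpF: assumes "1 \<le> i" "i < j" "j \<le> n" shows "REp i j = qb (r*s) (RE i n) (F j)"
  using EpF_aux assms by blast

lemma S4: assumes "1 \<le> j" "j < n"
  shows "qb (inverse (s^2)) (e (j+1)) (e j) * e j = sm (inverse (r^2)) (e j * qb (inverse (s^2)) (e (j+1)) (e j))"
proof -
  have R: "r^2 \<noteq> 0" and S: "inverse (s^2) \<noteq> 0" using rn sn by auto
  have "qb (s^2) (e j) (e (j+1)) * e j = sm (inverse (r^2)) (e j * qb (s^2) (e j) (e (j+1)))"
    by (rule inv_rel[OF R serC[OF assms]])
  then show ?thesis unfolding qb_swap[OF S, of "e (j+1)" "e j"] by (simp add: scaleR)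
qed

lemma FF: assumes "1 \<le> j" "j < n" shows "F j * e j = sm (inverse (r^2)) (e j * F j)"
proof (cases "j + 1 = n")
  case True
  then show ?thesis using F_step[of j] F_n S4[OF assms] assms by simp
next
  case False
  then have j2: "j + 1 < n" using assms by simp
  have eq: "F j = qb (inverse (s^2)) (F (j+2)) (qb (inverse (s^2)) (e (j+1)) (e j))"
  proof -
    have "F j = qb (inverse (s^2)) (qb (inverse (s^2)) (F (j+2)) (e (j+1))) (e j)"
      using F_step[of j] F_step[of "j+1"] j2 assms by simp
    also have "\<dots> = qb (inverse (s^2)) (F (j+2)) (qb (inverse (s^2)) (e (j+1)) (e j))"
      by (rule L1, rule comm_F[symmetric]) (use assms j2 in auto)
    finally show ?thesis .
  qed
  have c: "F (j+2) * e j = e j * F (j+2)" by (rule comm_F[symmetric]) (use assms j2 in auto)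
  show ?thesis unfolding eq by (rule L3R2[OF c S4[OF assms]])
qed

lemma claim5: assumes "1 \<le> i" "i < j" "j < n"
  shows "REp i j * e j = sm (inverse (r^2)) (e j * REp i j)"
proof -
  have eq: "REp i j = qb (r*s) (RE i n) (F j)" by (rule EpF) (use assms in auto)
  have a: "RE i n * e j = e j * RE i n" using cU[OF assms] by simp
  show ?thesis unfolding eq by (rule L3R2[OF a FF]) (use assms in auto)
qed

lemma claim2: assumes "1 \<le> i" "i + 1 < j" "j \<le> n"
  shows "e i * REp i j = sm (s^2) (REp i j * e i)"
proof -
  have eq: "REp i j = qb (r*s) (RE i n) (F j)" by (rule EpF) (use assms in auto)
  show ?thesis unfolding eq by (intro L3L1 claim1 comm_F) (use assms in auto)
qed

lemma S3: "REp (n-1) n * e n = sm (s^2) (e n * REp (n-1) n)"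
proof -
  have R: "r^2 \<noteq> 0" "r*s \<noteq> 0" and S: "inverse (s^2) \<noteq> 0" using rn sn by auto
  have n1: "n - 1 + 1 = n" "n - 1 < n" using n2 by auto
  have eq: "REp (n-1) n = sm (- (r^2)) (sm (-(r*s)) (qb (inverse (r*s)) (e n) (qb (inverse (r^2)) (e n) (e (n-1)))))"
    unfolding rootEp_n rootE_step[OF n1(2)] n1(1) rootE_refl qb_swap[OF R(1), of "e (n-1)"] qb_scaleL
      qb_swap[OF R(2)] ..
  have "qb (inverse (r*s)) (e n) (qb (inverse (r^2)) (e n) (e (n-1))) * e n
     = sm (inverse (inverse (s^2))) (e n * qb (inverse (r*s)) (e n) (qb (inverse (r^2)) (e n) (e (n-1))))"
    by (rule inv_rel[OF S quart])
  then show ?thesis unfolding eq by (simp add: scaleR)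
qed

lemma claim4_aux: "\<forall>i. n - i = Suc d \<longrightarrow> 1 \<le> i \<longrightarrow> REp i n * e n = sm (s^2) (e n * REp i n)"
proof (induction d)
  case 0
  show ?case
  proof (intro allI impI)
    fix i assume "n - i = Suc 0" "1 \<le> i"
    then have "i = n - 1" by auto
    then show "REp i n * e n = sm (s^2) (e n * REp i n)" using S3 by simp
  qed
next
  case (Suc d)
  show ?case
  proof (intro allI impI)
    fix i assume h: "n - i = Suc (Suc d)" "1 \<le> i"
    have i1: "i < n" "i + 1 < n" using h by auto
    have cm: "e i * e n = e n * e i" using h by (intro comm2) auto
    have eq: "REp i n = qb (r^2) (e i) (REp (i+1) n)"
      unfolding rootEp_n rootE_step[OF i1(1)] by (rule L1[OF cm])
    have IH: "REp (i+1) n * e n = sm (s^2) (e n * REp (i+1) n)" using Suc.IH h by auto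
    show "REp i n * e n = sm (s^2) (e n * REp i n)"
      unfolding eq by (rule L3R2[OF cm IH])
  qed
qed

lemma claim4: assumes "1 \<le> i" "i < n" shows "REp i n * e n = sm (s^2) (e n * REp i n)"
  using claim4_aux[of "n - i - 1"] assms by auto

end



lemma (in cen) qb_sm2: "qb q (sm a x) (sm b y) = sm (a*b) (qb q x y)"
  unfolding qb_def by (simp add: nsimps mult.commute)

theorem lemma3p2:
  fixes n :: nat and r s :: complex and c :: "complex \<Rightarrow> 'a::ring_1"
    and e f w w' wI wI' :: "nat \<Rightarrow> 'a"
  assumes "n \<ge> 2"
    and "r \<noteq> 0" "s \<noteq> 0" "r^3 \<noteq> s^3" "r^4 \<noteq> s^4"
    and "is_Urs_rep n r s c e f w w' wI wI'"
  shows "(\<forall>i j. 1 \<le> i \<and> i < j \<and> j \<le> n \<longrightarrow>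
            e i * rootE c r e i j = c (s^2) * rootE c r e i j * e i)
       \<and> (\<forall>i j. 1 \<le> i \<and> i + 1 < j \<and> j \<le> n \<longrightarrow>
            e i * rootEp n c r s e i j = c (s^2) * rootEp n c r s e i j * e i)
       \<and> (\<forall>i j. 1 \<le> i \<and> i < j \<and> j < n \<longrightarrow>
            rootE c r e i j * e j = c (s^2) * e j * rootE c r e i j)
       \<and> (\<forall>i. 1 \<le> i \<and> i < n \<longrightarrow>
            rootEp n c r s e i n * e n = c (s^2) * e n * rootEp n c r s e i n)
       \<and> (\<forall>i j. 1 \<le> i \<and> i < j \<and> j < n \<longrightarrow>
            rootEp n c r s e i j * e j = c (inverse (r^2)) * e j * rootEp n c r s e i j)"
proof -
  note H = assms(6)[unfolded is_Urs_rep_def]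
  have h1: "c 1 = 1" using H by (rule conjunct1)
  have h2: "\<forall>x y. c (x + y) = c x + c y" using H by (blast dest: conjunct2 conjunct1)
  have h3: "\<forall>x y. c (x * y) = c x * c y" using conjunct1[OF conjunct2[OF conjunct2[OF H]]] .
  have h4: "\<forall>x (a::'a). c x * a = a * c x" using conjunct1[OF conjunct2[OF conjunct2[OF conjunct2[OF H]]]] .
  note H5 = conjunct2[OF conjunct2[OF conjunct2[OF conjunct2[OF H]]]]
  interpret C: cen c
    by (unfold_locales; (rule h1 | rule h2[rule_format] | rule h3[rule_format] | rule h4[rule_format]))
  have smc: "c k * x * y = C.sm k (x * y)" for k x y unfolding C.sm_def by (simp add: mult.assoc)
  have rs: "r^2 + s^2 \<noteq> 0"
  proof
    assume "r^2 + s^2 = 0"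
    then have "r^2 = - (s^2)" by (simp add: eq_neg_iff_add_eq_0)
    then have "(r^2)^2 = (s^2)^2" by simp
    then show False using assms(5) by (simp add: power_mult[symmetric])
  qed
  have winv: "wI i * w i = 1" if "i \<in> {1..n}" for i using H5 that by blast
  have Kmul: "w i * (x * y) * wI i = (w i * x * wI i) * (w i * y * wI i)" if "i \<in> {1..n}" for i x y
  proof -
    have "w i * (x * y) * wI i = w i * x * (wI i * w i) * y * wI i" using winv[OF that] by (simp add: mult.assoc)
    then show ?thesis by (simp add: mult.assoc)
  qed
  have Ksm: "w i * C.sm k x * wI i = C.sm k (w i * x * wI i)" for i k x
    unfolding C.sm_def by (metis C.ccomm mult.assoc)
  have Kqb: "w i * C.qb q x y * wI i = C.qb q (w i * x * wI i) (w i * y * wI i)" if "i \<in> {1..n}" for i q x y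
    unfolding C.qb_def by (simp add: algebra_simps Ksm[unfolded mult.assoc] Kmul[OF that, unfolded mult.assoc])
  have Ke: "w i * e j * wI i = C.sm (pairing n r s j i) (e j)" if "i \<in> {1..n}" "j \<in> {1..n}" for i j
    using H5 that unfolding C.sm_def by blast
  have adl1: "adl e w wI i b = e i * b - w i * b * wI i * e i" for i b unfolding adl_def ..
  have Ser: "(adl e w wI i ^^ nat (1 - cartanB n i j)) (e j) = 0" if "i \<in> {1..n}" "j \<in> {1..n}" "i \<noteq> j" for i j
    using H5 that by blast
  have fp2: "(g ^^ 2) x = g (g x)" for g :: "'a \<Rightarrow> 'a" and x by (simp add: numeral_2_eq_2)
  have fp3: "(g ^^ 3) x = g (g (g x))" for g :: "'a \<Rightarrow> 'a" and x by (simp add: numeral_3_eq_3)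
  have pv1: "pairing n r s j j = r^2 * inverse (s^2)" if "j < n" for j using that unfolding pairing_def by simp
  have pv2: "pairing n r s n n = r * inverse s" unfolding pairing_def by simp
  have pv3: "pairing n r s (j+1) j = s^2" if "j < n" for j using that unfolding pairing_def by simp
  have pv4: "pairing n r s i (i+1) = inverse (r^2)" if "i < n" for i using that unfolding pairing_def by simp
  have pv5: "pairing n r s j i = 1" if "i + 2 \<le> j" for i j using that unfolding pairing_def by auto
  have cv0: "cartanB n i j = 0" if "i + 2 \<le> j" "j \<le> n" for i j using that unfolding cartanB_def by auto
  have cv1: "cartanB n j (j+1) = -1" if "1 \<le> j" "j < n" for j using that unfolding cartanB_def by auto
  have cv2: "cartanB n (i+1) i = -1" if "i + 1 < n" for i using that unfolding cartanB_def by auto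
  have cv3: "cartanB n n (n-1) = -2" using assms(1) unfolding cartanB_def by auto
  have comm: "e i * e j = e j * e i" if "1 \<le> i" "j \<le> n" "i + 2 \<le> j" for i j
  proof -
    have "(adl e w wI i ^^ nat (1 - cartanB n i j)) (e j) = 0" using that by (intro Ser) auto
    then have "e i * e j - w i * e j * wI i * e i = 0" using cv0[OF that(3,2)] by (simp add: adl1)
    moreover have "w i * e j * wI i = e j" using Ke[of i j] pv5[OF that(3)] that by (simp add: C.sm1)
    ultimately show ?thesis by simp
  qed
  have serC: "e j * C.qb (s^2) (e j) (e (j+1)) = C.sm (r^2) (C.qb (s^2) (e j) (e (j+1)) * e j)"
    if "1 \<le> j" "j < n" for j
  proof -
    have jr: "j \<in> {1..n}" "j+1 \<in> {1..n}" using that by auto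
    have "nat (1 - cartanB n j (j+1)) = 2" using cv1[OF that] by simp
    then have "(adl e w wI j ^^ 2) (e (j+1)) = 0" using Ser[of j "j+1"] jr by simp
    then have 0: "adl e w wI j (adl e w wI j (e (j+1))) = 0" unfolding fp2 .
    have a1: "adl e w wI j (e (j+1)) = C.qb (s^2) (e j) (e (j+1))"
      unfolding adl1 Ke[OF jr(1) jr(2)] pv3[OF that(2)] C.qb_def C.smR ..
    have k: "w j * C.qb (s^2) (e j) (e (j+1)) * wI j = C.sm (r^2) (C.qb (s^2) (e j) (e (j+1)))"
      unfolding Kqb[OF jr(1)] Ke[OF jr(1) jr(1)] Ke[OF jr(1) jr(2)] C.qb_sm2 pv1[OF that(2)] pv3[OF that(2)]
      using assms(3) by (simp add: field_simps)
    have 00: "adl e w wI j (C.qb (s^2) (e j) (e (j+1))) = 0" using 0 unfolding a1 .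
    show ?thesis using 00 unfolding adl1 k C.smR by simp
  qed
  have serD: "e (i+1) * C.qb (inverse (r^2)) (e (i+1)) (e i) = C.sm (inverse (s^2)) (C.qb (inverse (r^2)) (e (i+1)) (e i) * e (i+1))"
    if "1 \<le> i" "i + 1 < n" for i
  proof -
    have jr: "i \<in> {1..n}" "i+1 \<in> {1..n}" using that by auto
    have p4i: "pairing n r s i (i+1) = inverse (r^2)" using that by (intro pv4) simp
    have "nat (1 - cartanB n (i+1) i) = 2" using cv2[OF that(2)] by simp
    then have "(adl e w wI (i+1) ^^ 2) (e i) = 0" using Ser[of "i+1" i] jr by simp
    then have 0: "adl e w wI (i+1) (adl e w wI (i+1) (e i)) = 0" unfolding fp2 .
    have a1: "adl e w wI (i+1) (e i) = C.qb (inverse (r^2)) (e (i+1)) (e i)"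
      unfolding adl1 Ke[OF jr(2) jr(1)] p4i C.qb_def C.smR ..
    have k: "w (i+1) * C.qb (inverse (r^2)) (e (i+1)) (e i) * wI (i+1) = C.sm (inverse (s^2)) (C.qb (inverse (r^2)) (e (i+1)) (e i))"
      unfolding Kqb[OF jr(2)] Ke[OF jr(2) jr(2)] Ke[OF jr(2) jr(1)] C.qb_sm2 pv1[OF that(2)] p4i
      using assms(2) that by (simp add: field_simps)
    have 00: "adl e w wI (i+1) (C.qb (inverse (r^2)) (e (i+1)) (e i)) = 0" using 0 unfolding a1 .
    show ?thesis using 00 unfolding adl1 k C.smR by simp
  qed
  have quart: "e n * C.qb (inverse (r*s)) (e n) (C.qb (inverse (r^2)) (e n) (e (n-1)))
      = C.sm (inverse (s^2)) (C.qb (inverse (r*s)) (e n) (C.qb (inverse (r^2)) (e n) (e (n-1))) * e n)"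
  proof -
    have jr: "n \<in> {1..n}" "n-1 \<in> {1..n}" using assms(1) by auto
    have n1: "n - 1 + 1 = n" "n - 1 < n" "n \<noteq> n - 1" using assms(1) by auto
    have sc1: "r * inverse s * inverse (r^2) = inverse (r*s)" using assms(2,3) by (simp add: field_simps power2_eq_square)
    have sc2: "r * inverse s * inverse (r*s) = inverse (s^2)" using assms(2,3) by (simp add: field_simps power2_eq_square)
    have "nat (1 - cartanB n n (n-1)) = 3" using cv3 by simp
    then have "(adl e w wI n ^^ 3) (e (n-1)) = 0" using Ser[of n "n-1"] jr n1 by simp
    then have 0: "adl e w wI n (adl e w wI n (adl e w wI n (e (n-1)))) = 0" unfolding fp3 .
    have p4: "pairing n r s (n-1) n = inverse (r^2)" using pv4[OF n1(2)] n1(1) by simp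
    have a1: "adl e w wI n (e (n-1)) = C.qb (inverse (r^2)) (e n) (e (n-1))"
      unfolding adl1 Ke[OF jr(1) jr(2)] p4 C.qb_def C.smR ..
    have k1: "w n * C.qb (inverse (r^2)) (e n) (e (n-1)) * wI n = C.sm (inverse (r*s)) (C.qb (inverse (r^2)) (e n) (e (n-1)))"
      unfolding Kqb[OF jr(1)] Ke[OF jr(1) jr(1)] Ke[OF jr(1) jr(2)] C.qb_sm2 pv2 p4 sc1 ..
    have a2: "adl e w wI n (C.qb (inverse (r^2)) (e n) (e (n-1))) = C.qb (inverse (r*s)) (e n) (C.qb (inverse (r^2)) (e n) (e (n-1)))"
      unfolding adl1 unfolding k1 unfolding C.qb_def C.smR ..
    have k2: "w n * C.qb (inverse (r*s)) (e n) (C.qb (inverse (r^2)) (e n) (e (n-1))) * wI n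
       = C.sm (inverse (s^2)) (C.qb (inverse (r*s)) (e n) (C.qb (inverse (r^2)) (e n) (e (n-1))))"
      unfolding Kqb[OF jr(1), of "inverse (r*s)" "e n" "C.qb (inverse (r^2)) (e n) (e (n-1))"] k1 Ke[OF jr(1) jr(1)] C.qb_sm2 pv2 sc2 ..
    have 00: "adl e w wI n (C.qb (inverse (r*s)) (e n) (C.qb (inverse (r^2)) (e n) (e (n-1)))) = 0" using 0 unfolding a1 a2 .
    show ?thesis using 00 unfolding adl1 k2 C.smR by simp
  qed
  interpret U: urs c n r s e
    by (unfold_locales; (rule assms(1) assms(2) assms(3) rs comm serC serD quart | assumption)?)

  have sm_eq: "C.sm k (x * y) = c k * x * y" for k x y unfolding C.sm_def by (simp add: mult.assoc)
  show ?thesis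
  proof (intro conjI allI impI)
    fix i j assume h: "1 \<le> i \<and> i < j \<and> j \<le> n"
    show "e i * rootE c r e i j = c (s^2) * rootE c r e i j * e i"
      using U.claim1[of i j] h by (simp add: sm_eq)
  next
    fix i j assume h: "1 \<le> i \<and> i + 1 < j \<and> j \<le> n"
    show "e i * rootEp n c r s e i j = c (s^2) * rootEp n c r s e i j * e i"
      using U.claim2[of i j] h by (simp add: sm_eq)
  next
    fix i j assume h: "1 \<le> i \<and> i < j \<and> j < n"
    show "rootE c r e i j * e j = c (s^2) * e j * rootE c r e i j"
      using U.claim3[of i j] h by (simp add: sm_eq)
  next
    fix i assume h: "1 \<le> i \<and> i < n"
    show "rootEp n c r s e i n * e n = c (s^2) * e n * rootEp n c r s e i n"
      using U.claim4[of i] h by (simp add: sm_eq)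
  next
    fix i j assume h: "1 \<le> i \<and> i < j \<and> j < n"
    show "rootEp n c r s e i j * e j = c (inverse (r^2)) * e j * rootEp n c r s e i j"
      using U.claim5[of i j] h by (simp add: sm_eq)
  qed
qed

end
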